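(* Let $(\tilde\Theta^n_I)$ be a congruent family of covariant $n$-tensor fields on $\mathcal M_+(I)$, $I$ ranging over finite sets, let $I$ be a finite set and $\lambda>0$. If $\vec i=(i_1,\dots,i_n),\vec j=(j_1,\dots,j_n)\in I^n$ are multiindices with $\mathbf P(\vec i)=\mathbf P(\vec j)$, then $$(\tilde\Theta^n_I)_{\lambda c_I}(\delta_{i_1},\dots,\delta_{i_n})=(\tilde\Theta^n_I)_{\lambda c_I}(\delta_{j_1},\dots,\delta_{j_n}).$$
   Context: For a finite set $I$: $\mathcal S(I)=\{\sum_{i\in I}x_i\delta_i:x_i\in\mathbb R\}$, $\mathcal M_+(I)=\{\sum\mu_i\delta_i:\mu_i>0\}$ (an open subset with tangent space $\mathcal S(I)$), and $c_I:=\frac1{|I|}\sum_{i\in I}\delta_i$. A covariant $n$-tensor field on $\mathcal M_+(I)$ is a continuously varying family of $n$-multilinear forms on $\mathcal S(I)$. A Markov kernel $K:I\to\mathcal P(I')$ between finite sets is a stochastic matrix $K(i)=\sum_{i'}K^i_{i'}\delta_{i'}$, with $K_*(\sum x_i\delta_i)=\sum_{i,i'}K^i_{i'}x_i\delta_{i'}$; it is congruent if there is a map $\kappa:I'\to I$ with $K^i_{i'}=0$ whenever $\kappa(i')\ne i$. The family is congruent if $(\tilde\Theta^n_{I'})_{K_*\mu}(K_*V_1,\dots,K_*V_n)=(\tilde\Theta^n_I)_\mu(V_1,\dots,V_n)$ for every congruent Markov kernel $K:I\to\mathcal P(I')$ between finite sets with $K_*(\mathcal M_+(I))\subset\mathcal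 M_+(I')$. For a multiindex $\vec i\in I^n$, $\mathbf P(\vec i)$ is the partition of $\{1,\dots,n\}$ into the equivalence classes of $k\sim l\iff i_k=i_l$. *)

theory Defs
  imports "HOL-Analysis.Analysis"
begin

text \<open>Finite sets I are modelled as finite subsets of nat. Elements of S(I) are functions
  nat => real vanishing outside I; x = sum x_i delta_i corresponds to the function i |-> x_i.\<close>

definition S_space :: "nat set \<Rightarrow> (nat \<Rightarrow> real) set" where
  "S_space I = {x. \<forall>i. i \<notin> I \<longrightarrow> x i = 0}"

definition M_plus :: "nat set \<Rightarrow> (nat \<Rightarrow> real) set" where
  "M_plus I = {mu \<in> S_space I. \<forall>i\<in>I. mu i > 0}"

definition delta :: "nat \<Rightarrow> nat \<Rightarrow> real" where
  "delta i = (\<lambda>j. if j = i then 1 else 0)"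

definition c_I :: "nat set \<Rightarrow> nat \<Rightarrow> real" where
  "c_I I = (\<lambda>i. if i \<in> I then 1 / real (card I) else 0)"

text \<open>A covariant n-tensor field on M_+(I): for each mu in M_+(I), Theta I mu is an
  n-multilinear form on S(I) (arguments given as a list of length n), varying continuously in mu.\<close>

definition multilinear_on :: "nat set \<Rightarrow> nat \<Rightarrow> ((nat \<Rightarrow> real) list \<Rightarrow> real) \<Rightarrow> bool" where
  "multilinear_on I n T \<longleftrightarrow>
     (\<forall>Vs k x y (a::real) b. length Vs = n \<and> set Vs \<subseteq> S_space I \<and> k < n
        \<and> x \<in> S_space I \<and> y \<in> S_space I \<longrightarrow>
        T (Vs[k := (\<lambda>i. a * x i + b * y i)]) = a * T (Vs[k := x]) + b * T (Vs[k := y]))"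

definition cov_tensor_field :: "nat \<Rightarrow> nat set \<Rightarrow> ((nat \<Rightarrow> real) \<Rightarrow> (nat \<Rightarrow> real) list \<Rightarrow> real) \<Rightarrow> bool" where
  "cov_tensor_field n I Th \<longleftrightarrow>
     (\<forall>mu\<in>M_plus I. multilinear_on I n (Th mu)) \<and>
     (\<forall>Vs. length Vs = n \<and> set Vs \<subseteq> S_space I \<longrightarrow> continuous_on (M_plus I) (\<lambda>mu. Th mu Vs))"

definition markov_kernel :: "nat set \<Rightarrow> nat set \<Rightarrow> (nat \<Rightarrow> nat \<Rightarrow> real) \<Rightarrow> bool" where
  "markov_kernel I I' K \<longleftrightarrow> (\<forall>i\<in>I. (\<forall>i'\<in>I'. K i i' \<ge> 0) \<and> (\<Sum>i'\<in>I'. K i i') = 1)"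

definition congruent_kernel :: "nat set \<Rightarrow> nat set \<Rightarrow> (nat \<Rightarrow> nat \<Rightarrow> real) \<Rightarrow> bool" where
  "congruent_kernel I I' K \<longleftrightarrow>
     markov_kernel I I' K \<and>
     (\<exists>\<kappa>. (\<forall>i'\<in>I'. \<kappa> i' \<in> I) \<and> (\<forall>i\<in>I. \<forall>i'\<in>I'. \<kappa> i' \<noteq> i \<longrightarrow> K i i' = 0))"

definition push :: "nat set \<Rightarrow> nat set \<Rightarrow> (nat \<Rightarrow> nat \<Rightarrow> real) \<Rightarrow> (nat \<Rightarrow> real) \<Rightarrow> nat \<Rightarrow> real" where
  "push I I' K x = (\<lambda>i'. if i' \<in> I' then (\<Sum>i\<in>I. K i i' * x i) else 0)"

definition congruent_family ::
  "nat \<Rightarrow> (nat set \<Rightarrow> (nat \<Rightarrow> real) \<Rightarrow> (nat \<Rightarrow> real) list \<Rightarrow> real) \<Rightarrow> bool" where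
  "congruent_family n Th \<longleftrightarrow>
     (\<forall>I. finite I \<longrightarrow> cov_tensor_field n I (Th I)) \<and>
     (\<forall>I I' K. finite I \<and> finite I' \<and> congruent_kernel I I' K
        \<and> push I I' K ` M_plus I \<subseteq> M_plus I' \<longrightarrow>
        (\<forall>mu\<in>M_plus I. \<forall>Vs. length Vs = n \<and> set Vs \<subseteq> S_space I \<longrightarrow>
           Th I' (push I I' K mu) (map (push I I' K) Vs) = Th I mu Vs))"

definition index_partition :: "nat list \<Rightarrow> nat set set" where
  "index_partition is = {{k. k < length is \<and> is ! k = is ! l} | l. l < length is}"

end

theory Submission
  imports Defs
begin

lemma push_perm:
  assumes bij: "bij_betw s I I" and fin: "finite I" and i': "i' \<in> I"
  shows "push I I (\<lambda>i j. if j = s i then 1 else 0) x i' = x (inv_into I s i')"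
proof -
  have t: "inv_into I s i' \<in> I" using bij i' by (metis bij_betw_def inv_into_into)
  have eq: "\<And>i. i \<in> I \<Longrightarrow> (i' = s i) \<longleftrightarrow> (i = inv_into I s i')"
    using bij i' by (metis bij_betw_def bij_betw_inv_into_right inv_into_f_f)
  have "(\<Sum>i\<in>I. (if i' = s i then 1 else 0) * x i) = (\<Sum>i\<in>I. if i = inv_into I s i' then x i else 0)"
    by (rule sum.cong) (auto simp: eq)
  also have "\<dots> = x (inv_into I s i')" using fin t by simp
  finally show ?thesis using i' by (simp add: push_def)
qed

lemma perm_invariance:
  assumes cf: "congruent_family n Th" and fin: "finite I" and bij: "bij_betw s I I"
    and mu: "mu \<in> M_plus I" and muc: "\<And>i j. i \<in> I \<Longrightarrow> j \<in> I \<Longrightarrow> mu i = mu j"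
    and len: "length is = n" and sub: "set is \<subseteq> I"
  shows "Th I mu (map delta (map s is)) = Th I mu (map delta is)"
proof -
  define K where "K = (\<lambda>i j. if j = s i then (1::real) else 0)"
  have sI: "\<And>i. i \<in> I \<Longrightarrow> s i \<in> I" using bij by (metis bij_betwE)
  have tI: "\<And>i. i \<in> I \<Longrightarrow> inv_into I s i \<in> I" using bij by (metis bij_betw_def inv_into_into)
  have mk: "markov_kernel I I K"
    unfolding markov_kernel_def K_def using fin sI by (auto simp: sum.delta)
  have ck: "congruent_kernel I I K"
    unfolding congruent_kernel_def
  proof (intro conjI mk exI[of _ "inv_into I s"] ballI impI)
    fix i' assume "i' \<in> I" thus "inv_into I s i' \<in> I" by (rule tI)
  next
    fix i i' assume "i \<in> I" "i' \<in> I" "inv_into I s i' \<noteq> i"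
    thus "K i i' = 0" unfolding K_def using bij by (auto simp: bij_betw_def)
  qed
  have pushK: "\<And>x i'. i' \<in> I \<Longrightarrow> push I I K x i' = x (inv_into I s i')"
    unfolding K_def using push_perm[OF bij fin] by blast
  have pushout: "\<And>x i'. i' \<notin> I \<Longrightarrow> push I I K x i' = 0" by (simp add: push_def)
  have img: "push I I K ` M_plus I \<subseteq> M_plus I"
  proof
    fix y assume "y \<in> push I I K ` M_plus I"
    then obtain x where x: "x \<in> M_plus I" "y = push I I K x" by blast
    show "y \<in> M_plus I" unfolding M_plus_def S_space_def
    proof (intro CollectI conjI allI impI ballI)
      fix i assume "i \<notin> I" thus "y i = 0" using x(2) pushout by simp
    next
      fix i assume "i \<in> I" thus "y i > 0" using x pushK tI unfolding M_plus_def by simp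
    qed
  qed
  have pmu: "push I I K mu = mu"
  proof
    fix i' show "push I I K mu i' = mu i'"
    proof (cases "i' \<in> I")
      case True thus ?thesis using pushK[OF True] muc[OF tI[OF True] True] by simp
    next
      case False thus ?thesis using pushout mu unfolding M_plus_def S_space_def by auto
    qed
  qed
  have pdelta: "\<And>a. a \<in> I \<Longrightarrow> push I I K (delta a) = delta (s a)"
  proof
    fix a i' assume a: "a \<in> I"
    show "push I I K (delta a) i' = delta (s a) i'"
    proof (cases "i' \<in> I")
      case True
      have "(inv_into I s i' = a) \<longleftrightarrow> (i' = s a)"
        using bij a True by (metis bij_betw_def bij_betw_inv_into_right inv_into_f_f)
      thus ?thesis using pushK[OF True] by (auto simp: delta_def)
    next
      case False thus ?thesis using pushout sI a by (auto simp: delta_def)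
    qed
  qed
  have Vs: "length (map delta is) = n \<and> set (map delta is) \<subseteq> S_space I"
    using len sub by (auto simp: S_space_def delta_def)
  have e1: "Th I (push I I K mu) (map (push I I K) (map delta is)) = Th I mu (map delta is)"
  proof -
    have "\<forall>mu\<in>M_plus I. \<forall>Vs. length Vs = n \<and> set Vs \<subseteq> S_space I \<longrightarrow>
           Th I (push I I K mu) (map (push I I K) Vs) = Th I mu Vs"
      using cf fin ck img unfolding congruent_family_def by blast
    thus ?thesis using mu Vs by blast
  qed
  have e2: "map (push I I K) (map delta is) = map delta (map s is)"
    unfolding map_map by (rule map_cong[OF refl]) (use sub pdelta in auto)
  show ?thesis using e1 unfolding pmu e2 .
qed

theorem lemma4p5:
  fixes Th :: "nat set \<Rightarrow> (nat \<Rightarrow> real) \<Rightarrow> (nat \<Rightarrow> real) list \<Rightarrow> real"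
    and n :: nat and I :: "nat set" and lam :: real and "is" js :: "nat list"
  assumes "congruent_family n Th" and "finite I" and "lam > 0"
    and "length is = n" and "length js = n" and "set is \<subseteq> I" and "set js \<subseteq> I"
    and "index_partition is = index_partition js"
  shows "Th I (\<lambda>i. lam * c_I I i) (map delta is) = Th I (\<lambda>i. lam * c_I I i) (map delta js)"
proof -
  note a = assms
  have iff: "\<And>k l. k < n \<Longrightarrow> l < n \<Longrightarrow> (is!k = is!l) \<longleftrightarrow> (js!k = js!l)"
  proof -
    fix k l assume k: "k < n" and l: "l < n"
    have "{k. k < length is \<and> is ! k = is ! l} \<in> index_partition js"
      using a(8) l a(4) unfolding index_partition_def by blast
    then obtain m where m: "m < n" "{k. k < length is \<and> is ! k = is ! l} = {k. k < length js \<and> js ! k = js ! m}"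
      unfolding index_partition_def using a(5) by blast
    have "js ! l = js ! m" using m l a(4) by blast
    have "(k \<in> {k. k < length is \<and> is ! k = is ! l}) = (k \<in> {k. k < length js \<and> js ! k = js ! m})"
      using m(2) by simp
    hence "(is!k = is!l) \<longleftrightarrow> (js!k = js!m)" using k a(4) a(5) by simp
    thus "(is!k = is!l) \<longleftrightarrow> (js!k = js!l)" using \<open>js ! l = js ! m\<close> by simp
  qed
  define f where "f = (\<lambda>x. js ! (SOME k. k < n \<and> is ! k = x))"
  have fk: "\<And>k. k < n \<Longrightarrow> f (is!k) = js!k"
  proof -
    fix k assume k: "k < n"
    have "\<exists>k'. k' < n \<and> is ! k' = is ! k" using k by blast
    hence "(SOME k'. k' < n \<and> is ! k' = is!k) < n \<and> is ! (SOME k'. k' < n \<and> is ! k' = is!k) = is!k"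
      by (rule someI_ex)
    thus "f (is!k) = js!k" unfolding f_def using iff k by blast
  qed
  have mapf: "map f is = js"
    by (rule nth_equalityI) (auto simp: a(4) a(5) fk)
  have injf: "inj_on f (set is)"
  proof (rule inj_onI)
    fix x y assume "x \<in> set is" "y \<in> set is" "f x = f y"
    then obtain k l where "k < n" "l < n" "x = is!k" "y = is!l" "f x = f y"
      using a(4) by (metis in_set_conv_nth)
    thus "x = y" using fk iff by auto
  qed
  have bf: "bij_betw f (set is) (set js)"
    using injf mapf unfolding bij_betw_def by (metis set_map)
  have fin1: "finite (I - set is)" "finite (I - set js)" using a(2) by auto
  have "card (set is) = card (set js)" using bf by (rule bij_betw_same_card)
  hence "card (I - set is) = card (I - set js)"
    using a(2) a(6) a(7) by (simp add: card_Diff_subset)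
  then obtain g where bg: "bij_betw g (I - set is) (I - set js)"
    using fin1 by (metis finite_same_card_bij)
  define s where "s = (\<lambda>x. if x \<in> set is then f x else g x)"
  have b1: "bij_betw s (set is) (set js)" using bf unfolding s_def
    by (rule bij_betw_cong[THEN iffD1, rotated]) auto
  have b2: "bij_betw s (I - set is) (I - set js)" using bg unfolding s_def
    by (rule bij_betw_cong[THEN iffD1, rotated]) auto
  have "bij_betw s (set is \<union> (I - set is)) (set js \<union> (I - set js))"
    using bij_betw_combine[OF b1 b2] by blast
  hence bs: "bij_betw s I I" using a(6) a(7) by (simp add: Un_Diff_cancel Un_absorb1)
  have ms: "map s is = js" unfolding mapf[symmetric] by (rule map_cong[OF refl]) (simp add: s_def)
  have mu: "(\<lambda>i. lam * c_I I i) \<in> M_plus I"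
    using a(2) a(3) unfolding M_plus_def S_space_def c_I_def
    by (auto simp: card_gt_0_iff intro!: divide_pos_pos)
  show ?thesis
    using perm_invariance[OF a(1) a(2) bs mu _ a(4) a(6)] ms
    by (auto simp: c_I_def)
qed

end
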